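(* Let $n\ge5$, $m\in\mathbb N$, $p\in(0,1)$. Then $$\|\varrho_1\ast_1^0\varrho_1\|_2^2=\mathbb P\big(K_{1,4}\subseteq\overline{\mathcal G(n,m,p)}\big)=\big(1-p+p(1-p)^4\big)^m,$$ $$\|\varrho_2\ast_1^1\varrho_2\|_2^2=\big((1-p)^4+4p(1-p)^3+2p^2(1-p)^2\big)^m,$$ $$\|\varrho_2\ast_1^1\varrho_1\|_2^2=\big((1-p)^5+5p(1-p)^4+6p^2(1-p)^3+p^3(1-p)^2\big)^m,$$ $$\|\varrho_1\|_2^2=\big(1-2p^2+p^3\big)^m,$$ where $K_{1,4}$ is a star with four leaves on five fixed vertices of $\mathcal G(n,m,p)$ and $\overline{\mathcal G(n,m,p)}$ is the complement graph.
   Context: Random intersection graph $\mathcal G(n,m,p)$: vertices $v_1,\ldots,v_n$, attributes $a_1,\ldots,a_m$; each vertex chooses each attribute independently with probability $p$; two vertices are adjacent iff they chose a common attribute. $\mu_{m,p}(x)=p^{|x|}(1-p)^{m-|x|}$ on $\{0,1\}^m$. $g(x,y)=1$ if $x_i=y_i=1$ for some $i$, else $0$; $\varrho=\varrho_2=1-g$ and $\varrho_1(x)=\int\varrho(x,y)\,d\mu_{m,p}(y)$. Norms are $L^2$ with respect to products of $\mu_{m,p}$. Contraction: for $f$ on $(\{0,1\}^m)^k$, $h$ on $(\{0,1\}^m)^l$, $0\le a\le b\le k\wedge l$: $f\ast_b^ah(x_1,..,x_{b-a},y_1,..,y_{k-b},z_1,..,z_{l-b})=\int_{(\{0,1\}^m)^a}f(w,x,y)h(w,x,z)\,d\mu_{m,p}^{\otimes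 a}(w)$. *)

theory Defs
  imports Complex_Main "HOL-Library.FuncSet"
begin

text \<open>A point x of {0,1}^m is encoded as the set of attributes {i<m. x_i = 1},
  i.e. an element of Pow {..<m}.\<close>

definition cube :: "nat \<Rightarrow> nat set set" where
  "cube m = Pow {..<m}"

definition mu :: "nat \<Rightarrow> real \<Rightarrow> nat set \<Rightarrow> real" where
  "mu m p x = p ^ card x * (1 - p) ^ (m - card x)"

definition tuples :: "nat \<Rightarrow> nat \<Rightarrow> nat set list set" where
  "tuples m k = {xs. length xs = k \<and> set xs \<subseteq> cube m}"

definition integ :: "nat \<Rightarrow> real \<Rightarrow> nat \<Rightarrow> (nat set list \<Rightarrow> real) \<Rightarrow> real" where
  "integ m p k F = (\<Sum>xs\<in>tuples m k. F xs * prod_list (map (mu m p) xs))"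

definition norm2sq :: "nat \<Rightarrow> real \<Rightarrow> nat \<Rightarrow> (nat set list \<Rightarrow> real) \<Rightarrow> real" where
  "norm2sq m p k F = integ m p k (\<lambda>xs. (F xs)\<^sup>2)"

text \<open>Contraction f *_b^a h for f on ({0,1}^m)^k and h on ({0,1}^m)^l: its argument
  list is (x_1..x_{b-a}, y_1..y_{k-b}, z_1..z_{l-b}).\<close>

definition contr :: "nat \<Rightarrow> real \<Rightarrow> nat \<Rightarrow> nat \<Rightarrow> nat \<Rightarrow> nat \<Rightarrow>
    (nat set list \<Rightarrow> real) \<Rightarrow> (nat set list \<Rightarrow> real) \<Rightarrow> nat set list \<Rightarrow> real" where
  "contr m p k l a b f h args =
     (let x = take (b - a) args;
          y = take (k - b) (drop (b - a) args);
          z = drop ((b - a) + (k - b)) args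
      in integ m p a (\<lambda>w. f (w @ x @ y) * h (w @ x @ z)))"

definition g :: "nat set \<Rightarrow> nat set \<Rightarrow> real" where
  "g x y = (if x \<inter> y \<noteq> {} then 1 else 0)"

definition rho :: "nat set \<Rightarrow> nat set \<Rightarrow> real" where
  "rho x y = 1 - g x y"

definition rho1 :: "nat \<Rightarrow> real \<Rightarrow> nat set \<Rightarrow> real" where
  "rho1 m p x = (\<Sum>y\<in>cube m. rho x y * mu m p y)"

definition rho2L :: "nat set list \<Rightarrow> real" where
  "rho2L xs = rho (xs ! 0) (xs ! 1)"

definition rho1L :: "nat \<Rightarrow> real \<Rightarrow> nat set list \<Rightarrow> real" where
  "rho1L m p xs = rho1 m p (xs ! 0)"

text \<open>Random intersection graph G(n,m,p): a configuration X assigns to every vertex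
  i < n its attribute set X i; the configuration has probability
  prod_{i<n} mu(X i).\<close>

definition rig_adj :: "(nat \<Rightarrow> nat set) \<Rightarrow> nat \<Rightarrow> nat \<Rightarrow> bool" where
  "rig_adj X u v \<longleftrightarrow> u \<noteq> v \<and> X u \<inter> X v \<noteq> {}"

definition compl_adj :: "(nat \<Rightarrow> nat set) \<Rightarrow> nat \<Rightarrow> nat \<Rightarrow> bool" where
  "compl_adj X u v \<longleftrightarrow> u \<noteq> v \<and> \<not> rig_adj X u v"

definition rig_prob :: "nat \<Rightarrow> nat \<Rightarrow> real \<Rightarrow> ((nat \<Rightarrow> nat set) \<Rightarrow> bool) \<Rightarrow> real" where
  "rig_prob n m p E =
     (\<Sum>X\<in>PiE {..<n} (\<lambda>_. cube m). (if E X then 1 else 0) * (\<Prod>i<n. mu m p (X i)))"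

definition star_in_compl :: "nat \<Rightarrow> nat set \<Rightarrow> (nat \<Rightarrow> nat set) \<Rightarrow> bool" where
  "star_in_compl c L X \<longleftrightarrow> (\<forall>j\<in>L. compl_adj X c j)"

end

theory Submission
  imports Defs "HOL-Library.FuncSet"
begin

lemma sum_pow_prod:
  fixes F :: "nat \<Rightarrow> bool \<Rightarrow> real"
  assumes "finite A"
  shows "(\<Sum>x\<in>Pow A. \<Prod>i\<in>A. F i (i\<in>x)) = (\<Prod>i\<in>A. F i True + F i False)"
proof -
  have "(\<Prod>i\<in>A. F i True + F i False) = (\<Sum>X\<in>Pow A. (\<Prod>i\<in>X. F i True) * (\<Prod>i\<in>A-X. F i False))"
    by (rule prod_add[OF assms])
  also have "\<dots> = (\<Sum>x\<in>Pow A. \<Prod>i\<in>A. F i (i\<in>x))"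
  proof (rule sum.cong[OF refl])
    fix x assume x: "x \<in> Pow A"
    have "(\<Prod>i\<in>A. F i (i\<in>x)) = (\<Prod>i\<in>A \<inter> x. F i (i\<in>x)) * (\<Prod>i\<in>A - x. F i (i\<in>x))"
      by (metis assms prod.Int_Diff)
    also have "\<dots> = (\<Prod>i\<in>x. F i True) * (\<Prod>i\<in>A-x. F i False)"
      using x by (intro arg_cong2[where f="(*)"] prod.cong) auto
    finally show "(\<Prod>i\<in>x. F i True) * (\<Prod>i\<in>A-x. F i False) = (\<Prod>i\<in>A. F i (i\<in>x))" by simp
  qed
  finally show ?thesis by simp
qed

lemma sum_cube:
  fixes F :: "nat \<Rightarrow> bool \<Rightarrow> real"
  shows "(\<Sum>x\<in>cube m. \<Prod>i<m. F i (i\<in>x)) = (\<Prod>i<m. F i True + F i False)"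
  unfolding cube_def by (rule sum_pow_prod) simp

lemma sum_cube_const:
  fixes G :: "bool \<Rightarrow> real"
  shows "(\<Sum>x\<in>cube m. \<Prod>i<m. G (i\<in>x)) = (G True + G False) ^ m"
  using sum_cube[where F="\<lambda>i. G"] by simp

lemma sum_cube2_const:
  fixes G :: "bool \<Rightarrow> bool \<Rightarrow> real"
  shows "(\<Sum>x\<in>cube m. \<Sum>y\<in>cube m. \<Prod>i<m. G (i\<in>x) (i\<in>y))
     = (G True True + G True False + G False True + G False False) ^ m"
proof -
  have "(\<Sum>x\<in>cube m. \<Sum>y\<in>cube m. \<Prod>i<m. G (i\<in>x) (i\<in>y))
      = (\<Sum>x\<in>cube m. \<Prod>i<m. G (i\<in>x) True + G (i\<in>x) False)"
    by (intro sum.cong refl sum_cube)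
  also have "\<dots> = (G True True + G True False + G False True + G False False) ^ m"
    by (subst sum_cube_const) (simp add: add_ac)
  finally show ?thesis .
qed

lemma mu_prod:
  assumes "x \<in> cube m"
  shows "mu m p x = (\<Prod>i<m. if i \<in> x then p else 1 - p)"
proof -
  have xs: "x \<subseteq> {..<m}" using assms by (auto simp: cube_def)
  have fin: "finite x" using xs finite_subset by blast
  have "(\<Prod>i<m. if i \<in> x then p else 1 - p) = (\<Prod>i\<in>{..<m} \<inter> x. p) * (\<Prod>i\<in>{..<m} \<inter> - x. 1 - p)"
    using prod.If_cases[of "{..<m}" "\<lambda>i. i \<in> x" "\<lambda>_. p" "\<lambda>_. 1 - p"] by simp
  also have "\<dots> = p ^ card x * (1-p) ^ (m - card x)"
  proof -
    have "{..<m} \<inter> x = x" "{..<m} \<inter> - x = {..<m} - x" using xs by auto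
    then show ?thesis using xs by (simp add: card_Diff_subset fin)
  qed
  finally show ?thesis by (simp add: mu_def)
qed

lemma rho_prod:
  assumes "x \<in> cube m" "y \<in> cube m"
  shows "rho x y = (\<Prod>i<m. if i \<in> x \<and> i \<in> y then 0 else 1)"
proof (cases "x \<inter> y = {}")
  case True
  then have "(\<Prod>i<m. if i \<in> x \<and> i \<in> y then 0 else 1) = (1::real)"
    using True by (intro prod.neutral) auto
  then show ?thesis using True by (simp add: rho_def g_def)
next
  case False
  then obtain i where "i \<in> x" "i \<in> y" by blast
  moreover have "i < m" using assms \<open>i \<in> x\<close> by (auto simp: cube_def)
  ultimately have "(\<Prod>i<m. if i \<in> x \<and> i \<in> y then 0 else 1) = (0::real)"
    by (intro prod_zero) auto
  then show ?thesis using False by (simp add: rho_def g_def)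
qed

lemma rho1_prod:
  assumes x: "x \<in> cube m"
  shows "rho1 m p x = (\<Prod>i<m. if i \<in> x then 1 - p else 1)"
proof -
  have "rho1 m p x = (\<Sum>y\<in>cube m. \<Prod>i<m.
      (\<lambda>i c. (if i \<in> x \<and> c then 0 else 1) * (if c then p else 1 - p)) i (i \<in> y))"
    unfolding rho1_def
  proof (intro sum.cong refl)
    fix y assume y: "y \<in> cube m"
    show "rho x y * mu m p y = (\<Prod>i<m.
      (\<lambda>i c. (if i \<in> x \<and> c then 0 else 1) * (if c then p else 1 - p)) i (i \<in> y))"
      unfolding rho_prod[OF x y] mu_prod[OF y] prod.distrib[symmetric]
      by (auto intro!: prod.cong)
  qed
  also have "\<dots> = (\<Prod>i<m. if i \<in> x then 1 - p else 1)"
    by (subst sum_cube) (auto intro!: prod.cong)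
  finally show ?thesis .
qed

lemma tuples0: "tuples m 0 = {[]}" by (auto simp: tuples_def)
lemma tuples1: "tuples m 1 = (\<lambda>x. [x]) ` cube m"
  by (auto simp: tuples_def length_Suc_conv)
lemma tuples2: "tuples m 2 = (\<lambda>(x,y). [x,y]) ` (cube m \<times> cube m)"
  by (auto simp: tuples_def length_Suc_conv numeral_2_eq_2)

lemma integ0: "integ m p 0 F = F []" by (simp add: integ_def tuples0)
lemma integ1: "integ m p 1 F = (\<Sum>x\<in>cube m. F [x] * mu m p x)"
  unfolding integ_def tuples1 by (subst sum.reindex) (auto simp: inj_on_def)
lemma integ2: "integ m p 2 F = (\<Sum>x\<in>cube m. \<Sum>y\<in>cube m. F [x,y] * (mu m p x * mu m p y))"
proof -
  have inj: "inj_on (\<lambda>(x,y). [x,y]) (cube m \<times> cube m)" by (auto simp: inj_on_def)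
  have "integ m p 2 F = (\<Sum>q\<in>cube m \<times> cube m. (\<lambda>xs. F xs * prod_list (map (mu m p) xs)) ((\<lambda>(x,y). [x,y]) q))"
    unfolding integ_def tuples2 sum.reindex[OF inj] o_def by (rule refl)
  also have "\<dots> = (\<Sum>(x,y)\<in>cube m \<times> cube m. F [x,y] * (mu m p x * mu m p y))"
    by (rule sum.cong) (auto split: prod.splits)
  also have "\<dots> = (\<Sum>x\<in>cube m. \<Sum>y\<in>cube m. F [x,y] * (mu m p x * mu m p y))"
    by (rule sum.cartesian_product[symmetric])
  finally show ?thesis .
qed


lemma norm2sq1: "norm2sq m p 1 F = (\<Sum>x\<in>cube m. (F [x])\<^sup>2 * mu m p x)"
  unfolding norm2sq_def integ1 by simp
lemma norm2sq2: "norm2sq m p 2 F = (\<Sum>x\<in>cube m. \<Sum>y\<in>cube m. (F [x,y])\<^sup>2 * (mu m p x * mu m p y))"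
  unfolding norm2sq_def integ2 by simp

lemma contrA: "contr m p 1 1 0 1 (rho1L m p) (rho1L m p) [x] = rho1 m p x * rho1 m p x"
  by (simp add: contr_def integ0 rho1L_def)
lemma contrB: "contr m p 2 2 1 1 rho2L rho2L [y, z] = (\<Sum>w\<in>cube m. rho w y * rho w z * mu m p w)"
  unfolding contr_def Let_def integ1 by (simp add: rho2L_def)
lemma contrC: "contr m p 2 1 1 1 rho2L (rho1L m p) [y] = (\<Sum>w\<in>cube m. rho w y * rho1 m p w * mu m p w)"
  unfolding contr_def Let_def integ1 by (simp add: rho2L_def rho1L_def)

lemma I4: "(\<Sum>x\<in>cube m. rho1 m p x ^ 4 * mu m p x) = (1 - p + p * (1 - p) ^ 4) ^ m"
proof -
  have "(\<Sum>x\<in>cube m. rho1 m p x ^ 4 * mu m p x)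
     = (\<Sum>x\<in>cube m. \<Prod>i<m. (\<lambda>b. if b then (1 - p) ^ 4 * p else 1 - p) (i \<in> x))"
  proof (intro sum.cong refl)
    fix x assume x: "x \<in> cube m"
    show "rho1 m p x ^ 4 * mu m p x = (\<Prod>i<m. (\<lambda>b. if b then (1 - p) ^ 4 * p else 1 - p) (i \<in> x))"
      unfolding rho1_prod[OF x] mu_prod[OF x] prod_power_distrib prod.distrib[symmetric]
      by (auto intro!: prod.cong)
  qed
  also have "\<dots> = (1 - p + p * (1 - p) ^ 4) ^ m"
    by (subst sum_cube_const) (simp only: if_True if_False simp_thms power_one mult_1 mult_1_right, rule arg_cong[where f="\<lambda>t. t ^ m"], algebra)
  finally show ?thesis .
qed

lemma partA: "norm2sq m p 1 (contr m p 1 1 0 1 (rho1L m p) (rho1L m p)) = (1 - p + p * (1 - p) ^ 4) ^ m"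
proof -
  have e: "\<And>a::real. (a * a)\<^sup>2 = a ^ 4" by algebra
  show ?thesis unfolding norm2sq1 contrA e by (rule I4)
qed

lemma partD: "norm2sq m p 1 (rho1L m p) = (1 - 2 * p\<^sup>2 + p ^ 3) ^ m"
proof -
  have "norm2sq m p 1 (rho1L m p)
     = (\<Sum>x\<in>cube m. \<Prod>i<m. (\<lambda>b. if b then (1 - p)\<^sup>2 * p else 1 - p) (i \<in> x))"
    unfolding norm2sq1
  proof (intro sum.cong refl)
    fix x assume x: "x \<in> cube m"
    show "(rho1L m p [x])\<^sup>2 * mu m p x = (\<Prod>i<m. (\<lambda>b. if b then (1 - p)\<^sup>2 * p else 1 - p) (i \<in> x))"
      unfolding rho1L_def nth_Cons_0 rho1_prod[OF x] mu_prod[OF x] prod_power_distrib prod.distrib[symmetric]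
      by (auto intro!: prod.cong)
  qed
  also have "\<dots> = (1 - 2 * p\<^sup>2 + p ^ 3) ^ m"
    by (subst sum_cube_const) (simp only: if_True if_False simp_thms power_one mult_1 mult_1_right, rule arg_cong[where f="\<lambda>t. t ^ m"], algebra)
  finally show ?thesis .
qed

lemma contrB_prod:
  assumes y: "y \<in> cube m" and z: "z \<in> cube m"
  shows "contr m p 2 2 1 1 rho2L rho2L [y, z] = (\<Prod>i<m. if i \<in> y \<or> i \<in> z then 1 - p else 1)"
proof -
  have "contr m p 2 2 1 1 rho2L rho2L [y, z] = (\<Sum>w\<in>cube m. \<Prod>i<m.
     (\<lambda>i c. (if c \<and> i \<in> y then 0 else 1) * (if c \<and> i \<in> z then 0 else 1) * (if c then p else 1 - p)) i (i \<in> w))"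
    unfolding contrB
  proof (intro sum.cong refl)
    fix w assume w: "w \<in> cube m"
    show "rho w y * rho w z * mu m p w = (\<Prod>i<m.
     (\<lambda>i c. (if c \<and> i \<in> y then 0 else 1) * (if c \<and> i \<in> z then 0 else 1) * (if c then p else 1 - p)) i (i \<in> w))"
      unfolding rho_prod[OF w y] rho_prod[OF w z] mu_prod[OF w] prod.distrib[symmetric]
      by (auto intro!: prod.cong)
  qed
  also have "\<dots> = (\<Prod>i<m. if i \<in> y \<or> i \<in> z then 1 - p else 1)"
    by (subst sum_cube) (intro prod.cong refl, auto)
  finally show ?thesis .
qed

lemma partB: "norm2sq m p 2 (contr m p 2 2 1 1 rho2L rho2L)
           = ((1 - p) ^ 4 + 4 * p * (1 - p) ^ 3 + 2 * p\<^sup>2 * (1 - p)\<^sup>2) ^ m"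
proof -
  have "norm2sq m p 2 (contr m p 2 2 1 1 rho2L rho2L) = (\<Sum>y\<in>cube m. \<Sum>z\<in>cube m. \<Prod>i<m.
      (\<lambda>a b. (if a \<or> b then 1 - p else 1)\<^sup>2 * ((if a then p else 1 - p) * (if b then p else 1 - p))) (i \<in> y) (i \<in> z))"
    unfolding norm2sq2
  proof (intro sum.cong refl)
    fix y z assume y: "y \<in> cube m" and z: "z \<in> cube m"
    show "(contr m p 2 2 1 1 rho2L rho2L [y, z])\<^sup>2 * (mu m p y * mu m p z) = (\<Prod>i<m.
      (\<lambda>a b. (if a \<or> b then 1 - p else 1)\<^sup>2 * ((if a then p else 1 - p) * (if b then p else 1 - p))) (i \<in> y) (i \<in> z))"
      unfolding contrB_prod[OF y z] mu_prod[OF y] mu_prod[OF z] prod_power_distrib prod.distrib[symmetric]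
      by (auto intro!: prod.cong)
  qed
  also have "\<dots> = ((1 - p) ^ 4 + 4 * p * (1 - p) ^ 3 + 2 * p\<^sup>2 * (1 - p)\<^sup>2) ^ m"
    by (subst sum_cube2_const) (simp only: if_True if_False simp_thms power_one mult_1 mult_1_right, rule arg_cong[where f="\<lambda>t. t ^ m"], algebra)
  finally show ?thesis .
qed

lemma contrC_prod:
  assumes y: "y \<in> cube m"
  shows "contr m p 2 1 1 1 rho2L (rho1L m p) [y] = (\<Prod>i<m. if i \<in> y then 1 - p else (1 - p) * p + (1 - p))"
proof -
  have "contr m p 2 1 1 1 rho2L (rho1L m p) [y] = (\<Sum>w\<in>cube m. \<Prod>i<m.
     (\<lambda>i c. (if c \<and> i \<in> y then 0 else 1) * (if c then 1 - p else 1) * (if c then p else 1 - p)) i (i \<in> w))"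
    unfolding contrC
  proof (intro sum.cong refl)
    fix w assume w: "w \<in> cube m"
    show "rho w y * rho1 m p w * mu m p w = (\<Prod>i<m.
     (\<lambda>i c. (if c \<and> i \<in> y then 0 else 1) * (if c then 1 - p else 1) * (if c then p else 1 - p)) i (i \<in> w))"
      unfolding rho_prod[OF w y] rho1_prod[OF w] mu_prod[OF w] prod.distrib[symmetric]
      by (auto intro!: prod.cong)
  qed
  also have "\<dots> = (\<Prod>i<m. if i \<in> y then 1 - p else (1 - p) * p + (1 - p))"
    by (subst sum_cube) (rule prod.cong, simp_all)
  finally show ?thesis .
qed

lemma partC: "norm2sq m p 1 (contr m p 2 1 1 1 rho2L (rho1L m p))
           = ((1 - p) ^ 5 + 5 * p * (1 - p) ^ 4 + 6 * p\<^sup>2 * (1 - p) ^ 3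
              + p ^ 3 * (1 - p)\<^sup>2) ^ m"
proof -
  have "norm2sq m p 1 (contr m p 2 1 1 1 rho2L (rho1L m p)) = (\<Sum>y\<in>cube m. \<Prod>i<m.
      (\<lambda>a. (if a then 1 - p else (1 - p) * p + (1 - p))\<^sup>2 * (if a then p else 1 - p)) (i \<in> y))"
    unfolding norm2sq1
  proof (intro sum.cong refl)
    fix y assume y: "y \<in> cube m"
    show "(contr m p 2 1 1 1 rho2L (rho1L m p) [y])\<^sup>2 * mu m p y = (\<Prod>i<m.
      (\<lambda>a. (if a then 1 - p else (1 - p) * p + (1 - p))\<^sup>2 * (if a then p else 1 - p)) (i \<in> y))"
      unfolding contrC_prod[OF y] mu_prod[OF y] prod_power_distrib prod.distrib[symmetric]
      by (auto intro!: prod.cong)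
  qed
  also have "\<dots> = ((1 - p) ^ 5 + 5 * p * (1 - p) ^ 4 + 6 * p\<^sup>2 * (1 - p) ^ 3
              + p ^ 3 * (1 - p)\<^sup>2) ^ m"
    by (subst sum_cube_const) (simp only: if_True if_False simp_thms power_one mult_1 mult_1_right, rule arg_cong[where f="\<lambda>t. t ^ m"], algebra)
  finally show ?thesis .
qed

lemma finite_cube[simp]: "finite (cube m)" by (simp add: cube_def)

lemma sum_mu: "(\<Sum>y\<in>cube m. mu m p y) = 1"
proof -
  have "(\<Sum>y\<in>cube m. mu m p y) = (\<Sum>y\<in>cube m. \<Prod>i<m. (\<lambda>b. if b then p else 1 - p) (i \<in> y))"
    by (intro sum.cong refl) (simp add: mu_prod)
  also have "\<dots> = 1" by (subst sum_cube_const) simp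
  finally show ?thesis .
qed

lemma star_iff:
  assumes "c \<notin> L"
  shows "star_in_compl c L X \<longleftrightarrow> (\<forall>j\<in>L. X c \<inter> X j = {})"
  using assms unfolding star_in_compl_def compl_adj_def rig_adj_def by auto

lemma rho_star:
  assumes "c \<notin> L" "finite L"
  shows "(\<Prod>j\<in>L. rho (X c) (X j)) = (if star_in_compl c L X then 1 else 0)"
proof (cases "star_in_compl c L X")
  case True
  then have "\<forall>j\<in>L. X c \<inter> X j = {}" using star_iff[OF assms(1)] by simp
  then have "(\<Prod>j\<in>L. rho (X c) (X j)) = 1"
    by (intro prod.neutral) (simp add: rho_def g_def)
  then show ?thesis using True by simp
next
  case False
  then obtain j where j: "j \<in> L" "X c \<inter> X j \<noteq> {}" using star_iff[OF assms(1)] by auto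
  then have "(\<Prod>j\<in>L. rho (X c) (X j)) = 0"
    using assms(2) by (intro prod_zero) (auto simp: rho_def g_def intro!: bexI[OF _ j(1)])
  then show ?thesis using False by simp
qed

definition fstar :: "nat \<Rightarrow> real \<Rightarrow> nat \<Rightarrow> nat set \<Rightarrow> nat set \<Rightarrow> nat \<Rightarrow> nat set \<Rightarrow> real" where
  "fstar m p c L xc i y = (if i = c then (if xc = y then mu m p y else 0)
     else if i \<in> L then rho xc y * mu m p y else mu m p y)"

lemma step1:
  assumes cI: "c < n" and LI: "L \<subseteq> {..<n}" and cL: "c \<notin> L"
    and X: "X \<in> PiE {..<n} (\<lambda>_. cube m)"
  shows "(if star_in_compl c L X then 1 else 0) * (\<Prod>i<n. mu m p (X i))
       = (\<Sum>xc\<in>cube m. \<Prod>i<n. fstar m p c L xc i (X i))"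
proof -
  have finL: "finite L" using LI finite_subset by blast
  have Xc: "X c \<in> cube m" using X cI by auto
  have "(\<Sum>xc\<in>cube m. \<Prod>i<n. fstar m p c L xc i (X i))
      = (\<Sum>xc\<in>cube m. fstar m p c L xc c (X c) * (\<Prod>i\<in>{..<n}-{c}. fstar m p c L xc i (X i)))"
    using cI by (intro sum.cong refl) (simp add: prod.remove)
  also have "\<dots> = (\<Sum>xc\<in>cube m. if xc = X c then mu m p (X c) * (\<Prod>i\<in>{..<n}-{c}. fstar m p c L (X c) i (X i)) else 0)"
    by (intro sum.cong refl) (auto simp: fstar_def)
  also have "\<dots> = mu m p (X c) * (\<Prod>i\<in>{..<n}-{c}. fstar m p c L (X c) i (X i))"
    using Xc by (simp add: sum.delta)
  also have "(\<Prod>i\<in>{..<n}-{c}. fstar m p c L (X c) i (X i))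
      = (\<Prod>i\<in>{..<n}-{c}. (if i \<in> L then rho (X c) (X i) else 1) * mu m p (X i))"
    by (intro prod.cong refl) (auto simp: fstar_def)
  also have "\<dots> = (\<Prod>i\<in>{..<n}-{c}. if i \<in> L then rho (X c) (X i) else 1) * (\<Prod>i\<in>{..<n}-{c}. mu m p (X i))"
    by (rule prod.distrib)
  also have "(\<Prod>i\<in>{..<n}-{c}. if i \<in> L then rho (X c) (X i) else 1) = (\<Prod>j\<in>L. rho (X c) (X j))"
  proof -
    have "(\<Prod>i\<in>{..<n}-{c}. if i \<in> L then rho (X c) (X i) else 1)
        = (\<Prod>i\<in>({..<n}-{c}) \<inter> {i. i \<in> L}. rho (X c) (X i)) * (\<Prod>i\<in>({..<n}-{c}) \<inter> - {i. i \<in> L}. 1)"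
      by (rule prod.If_cases) simp
    also have "({..<n}-{c}) \<inter> {i. i \<in> L} = L" using LI cL by auto
    finally show ?thesis by simp
  qed
  also have "\<dots> = (if star_in_compl c L X then 1 else 0)" by (rule rho_star[OF cL finL])
  finally have "(\<Sum>xc\<in>cube m. \<Prod>i<n. fstar m p c L xc i (X i))
      = mu m p (X c) * ((if star_in_compl c L X then 1 else 0) * (\<Prod>i\<in>{..<n}-{c}. mu m p (X i)))" .
  also have "\<dots> = (if star_in_compl c L X then 1 else 0) * (mu m p (X c) * (\<Prod>i\<in>{..<n}-{c}. mu m p (X i)))"
    by (simp add: mult_ac)
  also have "mu m p (X c) * (\<Prod>i\<in>{..<n}-{c}. mu m p (X i)) = (\<Prod>i<n. mu m p (X i))"
    using cI by (simp add: prod.remove)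
  finally show ?thesis by simp
qed

lemma step3:
  assumes cI: "c < n" and LI: "L \<subseteq> {..<n}" and cL: "c \<notin> L" and cardL: "card L = 4"
    and xc: "xc \<in> cube m"
  shows "(\<Prod>i<n. \<Sum>y\<in>cube m. fstar m p c L xc i y) = rho1 m p xc ^ 4 * mu m p xc"
proof -
  have finL: "finite L" using LI finite_subset by blast
  have "(\<Prod>i<n. \<Sum>y\<in>cube m. fstar m p c L xc i y)
      = (\<Sum>y\<in>cube m. fstar m p c L xc c y) * (\<Prod>i\<in>{..<n}-{c}. \<Sum>y\<in>cube m. fstar m p c L xc i y)"
    using cI by (simp add: prod.remove)
  also have "(\<Sum>y\<in>cube m. fstar m p c L xc c y) = mu m p xc"
    using xc by (simp add: fstar_def sum.delta')
  also have "(\<Prod>i\<in>{..<n}-{c}. \<Sum>y\<in>cube m. fstar m p c L xc i y)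
      = (\<Prod>i\<in>{..<n}-{c}. if i \<in> L then rho1 m p xc else 1)"
    by (intro prod.cong refl) (auto simp: fstar_def rho1_def sum_mu)
  also have "\<dots> = (\<Prod>i\<in>({..<n}-{c}) \<inter> {i. i \<in> L}. rho1 m p xc) * (\<Prod>i\<in>({..<n}-{c}) \<inter> - {i. i \<in> L}. 1)"
    by (rule prod.If_cases) simp
  also have "({..<n}-{c}) \<inter> {i. i \<in> L} = L" using LI cL by auto
  finally show ?thesis using cardL by (simp add: mult_ac)
qed

lemma rig_star:
  assumes cI: "c < n" and LI: "L \<subseteq> {..<n}" and cL: "c \<notin> L" and cardL: "card L = 4"
  shows "rig_prob n m p (star_in_compl c L) = (\<Sum>x\<in>cube m. rho1 m p x ^ 4 * mu m p x)"
proof -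
  have fin: "finite (cube m)" by (simp add: cube_def)
  have "rig_prob n m p (star_in_compl c L)
      = (\<Sum>X\<in>PiE {..<n} (\<lambda>_. cube m). \<Sum>xc\<in>cube m. \<Prod>i<n. fstar m p c L xc i (X i))"
    unfolding rig_prob_def using step1[OF cI LI cL] by (intro sum.cong refl) simp
  also have "\<dots> = (\<Sum>xc\<in>cube m. \<Sum>X\<in>PiE {..<n} (\<lambda>_. cube m). \<Prod>i<n. fstar m p c L xc i (X i))"
    by (rule sum.swap)
  also have "\<dots> = (\<Sum>xc\<in>cube m. \<Prod>i<n. \<Sum>y\<in>cube m. fstar m p c L xc i y)"
    using fin by (intro sum.cong refl prod_sum_PiE[symmetric]) auto
  also have "\<dots> = (\<Sum>x\<in>cube m. rho1 m p x ^ 4 * mu m p x)"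
    using step3[OF cI LI cL cardL] by (intro sum.cong refl) simp
  finally show ?thesis .
qed

theorem lemma7p3:
  fixes n m :: nat and p :: real and c :: nat and L :: "nat set"
  assumes "n \<ge> 5" and "0 < p" and "p < 1"
    and "c < n" and "L \<subseteq> {..<n}" and "card L = 4" and "c \<notin> L"
  shows "norm2sq m p 1 (contr m p 1 1 0 1 (rho1L m p) (rho1L m p))
           = rig_prob n m p (star_in_compl c L)
       \<and> rig_prob n m p (star_in_compl c L) = (1 - p + p * (1 - p) ^ 4) ^ m
       \<and> norm2sq m p 2 (contr m p 2 2 1 1 rho2L rho2L)
           = ((1 - p) ^ 4 + 4 * p * (1 - p) ^ 3 + 2 * p\<^sup>2 * (1 - p)\<^sup>2) ^ m
       \<and> norm2sq m p 1 (contr m p 2 1 1 1 rho2L (rho1L m p))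
           = ((1 - p) ^ 5 + 5 * p * (1 - p) ^ 4 + 6 * p\<^sup>2 * (1 - p) ^ 3
              + p ^ 3 * (1 - p)\<^sup>2) ^ m
       \<and> norm2sq m p 1 (rho1L m p) = (1 - 2 * p\<^sup>2 + p ^ 3) ^ m"
proof -
  have r: "rig_prob n m p (star_in_compl c L) = (1 - p + p * (1 - p) ^ 4) ^ m"
    using rig_star[OF assms(4,5,7,6)] I4 by simp
  show ?thesis using r partA partB partC partD by simp
qed

end
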